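(* Let $d\ge1$, $D>0$, $\sigma\ge0$, $\alpha\in[0,1)$, $\rho>0$. Let $w^*\in\mathbb{R}^d$ with $\|w^*\|\le D$, and let $(x,\epsilon,b)$ be mutually independent random variables with $x\in\mathbb{R}^d$, $\|x\|\le1$ a.s., $\Sigma:=\mathbb{E}[(x-\mathbb{E}x)(x-\mathbb{E}x)^T]\succeq\rho I$, $\epsilon\in\mathbb{R}$, $|\epsilon|\le\sigma$ a.s., $\mathbb{E}\epsilon=0$, $b\in\mathbb{R}$, $\mathbb{P}(b\ne0)=\alpha$. Let $v,q\in\mathbb{R}^d$ with $\|v\|,\|q\|\le1$, let $R=6D+\sigma$, and define $$G_R(w):=\mathbb{E}_{x,\epsilon,b}\big[h_R(\langle w-w^*,x-v\rangle-\langle w^*,q\rangle-\epsilon-b)\big].$$ Then $G_R$ is $(1-\alpha)\rho$-strongly convex on $\mathcal W$. Furthermore, if $v=\mathbb{E}[x]$, then $w^*=\arg\min_{w\in\mathcal W}G_R(w)$.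
   Context: $\mathcal W=\{w\in\mathbb{R}^d:\|w\|\le D\}$. The Huber loss is $h_R(s)=\frac12s^2$ if $|s|\le R$ and $h_R(s)=R(|s|-\frac12R)$ otherwise. A function $f$ is $\lambda$-strongly convex on a convex set $\mathcal W$ if $w\mapsto f(w)-\frac\lambda2\|w\|^2$ is convex on $\mathcal W$. *)

theory Defs
  imports "HOL-Probability.Probability"
begin

definition huber :: "real \<Rightarrow> real \<Rightarrow> real" where
  "huber R s = (if \<bar>s\<bar> \<le> R then s\<^sup>2 / 2 else R * (\<bar>s\<bar> - R / 2))"

definition strongly_convex_on :: "'a::real_normed_vector set \<Rightarrow> real \<Rightarrow> ('a \<Rightarrow> real) \<Rightarrow> bool" where
  "strongly_convex_on W lam f \<longleftrightarrow> convex_on W (\<lambda>w. f w - lam / 2 * (norm w)\<^sup>2)"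

definition mutually_indep3 ::
  "'s measure \<Rightarrow> ('s \<Rightarrow> 'a::topological_space) \<Rightarrow> ('s \<Rightarrow> 'b::topological_space)
     \<Rightarrow> ('s \<Rightarrow> 'c::topological_space) \<Rightarrow> bool" where
  "mutually_indep3 M X Y Z \<longleftrightarrow>
     (\<forall>A\<in>sets borel. \<forall>B\<in>sets borel. \<forall>C\<in>sets borel.
        measure M {\<omega>\<in>space M. X \<omega> \<in> A \<and> Y \<omega> \<in> B \<and> Z \<omega> \<in> C}
        = measure M {\<omega>\<in>space M. X \<omega> \<in> A} * measure M {\<omega>\<in>space M. Y \<omega> \<in> B}
          * measure M {\<omega>\<in>space M. Z \<omega> \<in> C})"

end

theory Submission
  imports Defs
begin
lemma huber_ge:
  assumes "\<bar>a\<bar> \<le> R"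
  shows "a * s - a\<^sup>2 / 2 \<le> huber R s"
proof (cases "\<bar>s\<bar> \<le> R")
  case True
  have "0 \<le> (s - a)\<^sup>2 / 2" by simp
  then show ?thesis using True by (simp add: huber_def power2_eq_square algebra_simps)
next
  case False
  have "a * s \<le> \<bar>a\<bar> * \<bar>s\<bar>" by (metis abs_ge_self abs_mult)
  moreover have "0 \<le> (R - \<bar>a\<bar>) * (\<bar>s\<bar> - (R + \<bar>a\<bar>) / 2)"
    using False assms by (intro mult_nonneg_nonneg) auto
  moreover have "(R - \<bar>a\<bar>) * (\<bar>s\<bar> - (R + \<bar>a\<bar>) / 2) = R*\<bar>s\<bar> - \<bar>a\<bar>*\<bar>s\<bar> - (R*R - a*a)/2"
    by (simp add: algebra_simps abs_mult_self flip: abs_mult)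
  moreover have "huber R s = R*\<bar>s\<bar> - R*R/2" using False by (simp add: huber_def algebra_simps)
  ultimately show ?thesis by (simp add: power2_eq_square)
qed

lemma huber_clamp:
  assumes "0 \<le> R"
  shows "huber R s = max (-R) (min R s) * s - (max (-R) (min R s))\<^sup>2 / 2"
  using assms by (auto simp: huber_def power2_eq_square algebra_simps abs_if max_def min_def)

lemma huber_convex:
  assumes "0 \<le> R" "0 \<le> t" "t \<le> 1"
  shows "huber R (t * s1 + (1 - t) * s2) \<le> t * huber R s1 + (1 - t) * huber R s2"
proof -
  define a where "a = max (-R) (min R (t * s1 + (1 - t) * s2))"
  have aR: "\<bar>a\<bar> \<le> R" using assms unfolding a_def by auto
  have "huber R (t * s1 + (1 - t) * s2) = a * (t * s1 + (1 - t) * s2) - a\<^sup>2 / 2"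
    unfolding a_def by (rule huber_clamp[OF assms(1)])
  also have "\<dots> = t * (a * s1 - a\<^sup>2 / 2) + (1 - t) * (a * s2 - a\<^sup>2/2)"
    by (simp add: field_simps)
  also have "\<dots> \<le> t * huber R s1 + (1 - t) * huber R s2"
    using huber_ge[OF aR] assms by (intro add_mono mult_left_mono) auto
  finally show ?thesis .
qed

lemma huber_quad: "\<bar>s\<bar> \<le> R \<Longrightarrow> huber R s = s\<^sup>2 / 2"
  by (simp add: huber_def)

lemma huber_strong_pt:
  assumes "0 \<le> t" "t \<le> 1" "\<bar>p1 - c\<bar> \<le> R" "\<bar>p2 - c\<bar> \<le> R"
  shows "huber R (t * p1 + (1 - t) * p2 - c) + t * (1 - t) / 2 * (p1 - p2)\<^sup>2
     \<le> t * huber R (p1 - c) + (1 - t) * huber R (p2 - c)"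
proof -
  have e: "t * p1 + (1 - t) * p2 - c = t * (p1 - c) + (1 - t) * (p2 - c)" by algebra
  have "\<bar>t * (p1 - c) + (1 - t) * (p2 - c)\<bar> \<le> t * R + (1 - t) * R"
  proof -
    have "\<bar>t * (p1 - c)\<bar> \<le> t * R" using assms by (simp add: abs_mult mult_left_mono)
    moreover have "\<bar>(1 - t) * (p2 - c)\<bar> \<le> (1 - t) * R" using assms by (simp add: abs_mult mult_left_mono)
    ultimately show ?thesis by (meson abs_triangle_ineq add_mono order_trans)
  qed
  then have "\<bar>t * p1 + (1 - t) * p2 - c\<bar> \<le> R" using e by (simp add: algebra_simps)
  then have h: "huber R (t * p1 + (1 - t) * p2 - c) = (t * p1 + (1 - t) * p2 - c)\<^sup>2 / 2"
    by (rule huber_quad)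
  have id: "(t * p1 + (1 - t) * p2 - c)\<^sup>2 + t * (1 - t) * (p1 - p2)\<^sup>2
     = t * (p1 - c)\<^sup>2 + (1 - t) * (p2 - c)\<^sup>2" by algebra
  show ?thesis unfolding h huber_quad[OF assms(3)] huber_quad[OF assms(4)]
    using id by (simp add: field_simps)
qed

lemma (in prob_space) indep_fg:
  fixes x :: "'a \<Rightarrow> 'b::topological_space" and eps bb :: "'a \<Rightarrow> real"
    and f :: "'b \<Rightarrow> real" and g :: "real \<times> real \<Rightarrow> real"
  assumes mi: "mutually_indep3 M x eps bb"
    and mx: "x \<in> borel_measurable M" and me: "eps \<in> borel_measurable M" and mb: "bb \<in> borel_measurable M"
    and mf: "f \<in> borel_measurable borel" and mg: "g \<in> borel_measurable borel"
  shows "indep_var borel (\<lambda>\<omega>. f (x \<omega>)) borel (\<lambda>\<omega>. g (eps \<omega>, bb \<omega>))"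
proof -
  define F0 where "F0 = {x -` A \<inter> space M | A. A \<in> sets borel}"
  define F1 where "F1 = {eps -` B \<inter> bb -` C \<inter> space M | B C. B \<in> sets borel \<and> C \<in> sets borel}"
  have F0ev: "F0 \<subseteq> events" unfolding F0_def using mx by (auto intro: measurable_sets)
  have F1ev: "F1 \<subseteq> events"
  proof
    fix c assume "c \<in> F1"
    then obtain B C where B: "B \<in> sets borel" and C: "C \<in> sets borel"
      and c: "c = eps -` B \<inter> bb -` C \<inter> space M" unfolding F1_def by blast
    have "c = (eps -` B \<inter> space M) \<inter> (bb -` C \<inter> space M)" using c by auto
    then show "c \<in> events" using B C me mb by (auto intro!: sets.Int measurable_sets)
  qed
  have "indep_set F0 F1"
    unfolding indep_sets2_eq
  proof (intro conjI F0ev F1ev ballI)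
    fix a c assume "a \<in> F0" "c \<in> F1"
    then obtain A B C where A: "A \<in> sets borel" and B: "B \<in> sets borel" and C: "C \<in> sets borel"
      and a: "a = x -` A \<inter> space M" and c: "c = eps -` B \<inter> bb -` C \<inter> space M"
      unfolding F0_def F1_def by blast
    have e1: "a \<inter> c = {\<omega>\<in>space M. x \<omega> \<in> A \<and> eps \<omega> \<in> B \<and> bb \<omega> \<in> C}" using a c by auto
    have e2: "c = {\<omega>\<in>space M. x \<omega> \<in> UNIV \<and> eps \<omega> \<in> B \<and> bb \<omega> \<in> C}" using c by auto
    have e3: "a = {\<omega>\<in>space M. x \<omega> \<in> A}" using a by auto
    have u: "prob {\<omega>\<in>space M. x \<omega> \<in> UNIV} = 1" by (simp add: prob_space)
    have mi': "\<And>A B C. A \<in> sets borel \<Longrightarrow> B \<in> sets borel \<Longrightarrow> C \<in> sets borel \<Longrightarrow>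
        prob {\<omega>\<in>space M. x \<omega> \<in> A \<and> eps \<omega> \<in> B \<and> bb \<omega> \<in> C}
        = prob {\<omega>\<in>space M. x \<omega> \<in> A} * prob {\<omega>\<in>space M. eps \<omega> \<in> B} * prob {\<omega>\<in>space M. bb \<omega> \<in> C}"
      using mi unfolding mutually_indep3_def by blast
    have 1: "prob (a \<inter> c) = prob {\<omega>\<in>space M. x \<omega> \<in> A} * prob {\<omega>\<in>space M. eps \<omega> \<in> B} * prob {\<omega>\<in>space M. bb \<omega> \<in> C}"
      unfolding e1 by (rule mi'[OF A B C])
    have U: "(UNIV :: 'b set) \<in> sets borel" by simp
    have 2: "prob c = prob {\<omega>\<in>space M. eps \<omega> \<in> B} * prob {\<omega>\<in>space M. bb \<omega> \<in> C}"
      unfolding e2 mi'[OF U B C] u by simp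
    show "prob (a \<inter> c) = prob a * prob c" using 1 2 e3 by simp
  qed
  moreover have "Int_stable F0"
  proof (rule Int_stableI)
    fix a c assume "a \<in> F0" "c \<in> F0"
    then obtain B B' where "B \<in> sets borel" "B' \<in> sets borel"
      "a = x -` B \<inter> space M" "c = x -` B' \<inter> space M"
      unfolding F0_def by blast
    then show "a \<inter> c \<in> F0" unfolding F0_def
      by (intro CollectI exI[of _ "B \<inter> B'"]) auto
  qed
  moreover have "Int_stable F1"
  proof (rule Int_stableI)
    fix a c assume "a \<in> F1" "c \<in> F1"
    then obtain B C B' C' where "B \<in> sets borel" "C \<in> sets borel" "B' \<in> sets borel" "C' \<in> sets borel"
      "a = eps -` B \<inter> bb -` C \<inter> space M" "c = eps -` B' \<inter> bb -` C' \<inter> space M"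
      unfolding F1_def by blast
    then show "a \<inter> c \<in> F1" unfolding F1_def
      by (intro CollectI exI[of _ "B \<inter> B'"] exI[of _ "C \<inter> C'"]) auto
  qed
  ultimately have ind: "indep_set (sigma_sets (space M) F0) (sigma_sets (space M) F1)"
    by (rule indep_set_sigma_sets)
  have rvX: "random_variable borel (\<lambda>\<omega>. f (x \<omega>))" using mx mf by measurable
  define N where "N = sigma (space M) F1"
  have F1sp: "F1 \<subseteq> Pow (space M)" unfolding F1_def by auto
  have spN: "space N = space M" unfolding N_def using F1sp by simp
  have setsN: "sets N = sigma_sets (space M) F1" unfolding N_def using F1sp by simp
  have eN: "eps \<in> measurable N borel"
  proof (rule measurableI)
    fix A :: "real set" assume "A \<in> sets borel"
    then have "eps -` A \<inter> bb -` UNIV \<inter> space M \<in> F1" unfolding F1_def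
      by (intro CollectI exI[of _ A] exI[of _ UNIV]) simp
    moreover have "eps -` A \<inter> bb -` UNIV \<inter> space M = eps -` A \<inter> space M" by simp
    ultimately show "eps -` A \<inter> space N \<in> sets N" unfolding spN setsN
      by (metis sigma_sets.Basic)
  qed simp
  have bN: "bb \<in> measurable N borel"
  proof (rule measurableI)
    fix A :: "real set" assume "A \<in> sets borel"
    then have "eps -` UNIV \<inter> bb -` A \<inter> space M \<in> F1" unfolding F1_def
      by (intro CollectI exI[of _ UNIV] exI[of _ A]) simp
    moreover have "eps -` UNIV \<inter> bb -` A \<inter> space M = bb -` A \<inter> space M" by simp
    ultimately show "bb -` A \<inter> space N \<in> sets N" unfolding spN setsN
      by (metis sigma_sets.Basic)
  qed simp
  have pN: "(\<lambda>\<omega>. (eps \<omega>, bb \<omega>)) \<in> measurable N (borel \<Otimes>\<^sub>M borel)"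
    using eN bN by (rule measurable_Pair)
  have mg': "g \<in> measurable (borel \<Otimes>\<^sub>M borel) borel"
    using mg by (simp add: borel_prod)
  have YN: "(\<lambda>\<omega>. g (eps \<omega>, bb \<omega>)) \<in> measurable N borel"
    using measurable_compose[OF pN mg'] by (simp add: o_def)
  have rvY: "random_variable borel (\<lambda>\<omega>. g (eps \<omega>, bb \<omega>))" using me mb mg by measurable
  have sub0: "sigma_sets (space M) {(\<lambda>\<omega>. f (x \<omega>)) -` A \<inter> space M |A. A \<in> sets borel}
      \<subseteq> sigma_sets (space M) F0"
  proof (rule sigma_sets_mono)
    show "{(\<lambda>\<omega>. f (x \<omega>)) -` A \<inter> space M |A. A \<in> sets borel} \<subseteq> sigma_sets (space M) F0"
    proof safe
      fix A :: "real set" assume "A \<in> sets borel"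
      then have "f -` A \<in> sets borel" using mf measurable_sets[OF mf] by force
      then have "x -` (f -` A) \<inter> space M \<in> F0" unfolding F0_def by blast
      then show "(\<lambda>\<omega>. f (x \<omega>)) -` A \<inter> space M \<in> sigma_sets (space M) F0"
        by (auto simp: vimage_def)
    qed
  qed
  have sub1: "sigma_sets (space M) {(\<lambda>\<omega>. g (eps \<omega>, bb \<omega>)) -` A \<inter> space M |A. A \<in> sets borel}
      \<subseteq> sigma_sets (space M) F1"
  proof (rule sigma_sets_mono)
    show "{(\<lambda>\<omega>. g (eps \<omega>, bb \<omega>)) -` A \<inter> space M |A. A \<in> sets borel} \<subseteq> sigma_sets (space M) F1"
    proof safe
      fix A :: "real set" assume "A \<in> sets borel"
      then show "(\<lambda>\<omega>. g (eps \<omega>, bb \<omega>)) -` A \<inter> space M \<in> sigma_sets (space M) F1"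
        using measurable_sets[OF YN] unfolding spN setsN by auto
    qed
  qed
  have sM0: "sigma_sets (space M) F0 \<subseteq> events"
    using F0ev by (simp add: sets.sigma_sets_subset)
  have sM1: "sigma_sets (space M) F1 \<subseteq> events"
    using F1ev by (simp add: sets.sigma_sets_subset)
  show ?thesis unfolding indep_var_eq
    using ind sub0 sub1 rvX rvY sM0 sM1 unfolding indep_sets2_eq
    by (meson subset_iff)
qed

lemma inner_bound4:
  fixes u y v :: "'a::real_inner"
  assumes "norm y \<le> 1" "norm v \<le> 1" "norm u \<le> 2 * D"
  shows "\<bar>u \<bullet> (y - v)\<bar> \<le> 4 * D"
proof -
  have "norm (y - v) \<le> 2" using assms norm_triangle_ineq4[of y v] by linarith
  have D0: "0 \<le> D" using assms(3) norm_ge_zero[of u] by linarith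
  have "norm u * norm (y - v) \<le> (2 * D) * 2"
    using assms D0 \<open>norm (y - v) \<le> 2\<close> by (intro mult_mono) auto
  then show ?thesis using Cauchy_Schwarz_ineq2[of u "y - v"] by linarith
qed

lemma norm_diff_2D:
  fixes w ws :: "'a::real_normed_vector"
  assumes "norm w \<le> D" "norm ws \<le> D"
  shows "norm (w - ws) \<le> 2 * D"
  using assms norm_triangle_ineq4[of w ws] by linarith

lemma sq_int_bound:
  fixes d y p :: "'a::real_inner"
  assumes "norm y \<le> 1"
  shows "norm ((d \<bullet> (y - p))\<^sup>2) \<le> (norm d * (1 + norm p))\<^sup>2"
proof -
  have "norm (y - p) \<le> 1 + norm p" using assms norm_triangle_ineq4[of y p] by linarith
  then have "norm d * norm (y - p) \<le> norm d * (1 + norm p)" by (simp add: mult_left_mono)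
  then have "\<bar>d \<bullet> (y - p)\<bar> \<le> norm d * (1 + norm p)" using Cauchy_Schwarz_ineq2[of d "y - p"] by linarith
  then have "\<bar>d \<bullet> (y - p)\<bar>\<^sup>2 \<le> (norm d * (1 + norm p))\<^sup>2"
    by (intro power_mono) auto
  then show ?thesis by simp
qed

lemma lin_int_bound:
  fixes d y p :: "'a::real_inner"
  assumes "norm y \<le> 1"
  shows "norm (d \<bullet> (y - p)) \<le> norm d * (1 + norm p)"
proof -
  have "norm (y - p) \<le> 1 + norm p" using assms norm_triangle_ineq4[of y p] by linarith
  then have "norm d * norm (y - p) \<le> norm d * (1 + norm p)" by (simp add: mult_left_mono)
  then show ?thesis using Cauchy_Schwarz_ineq2[of d "y - p"] by simp
qed

theorem lemma10:
  fixes M :: "'s measure"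
    and x :: "'s \<Rightarrow> 'a::euclidean_space" and eps b :: "'s \<Rightarrow> real"
    and ws v q :: 'a and D \<sigma> \<alpha> \<rho> R :: real and G :: "'a \<Rightarrow> real"
  assumes "prob_space M"
    and "D > 0" and "\<sigma> \<ge> 0" and "0 \<le> \<alpha>" and "\<alpha> < 1" and "\<rho> > 0"
    and "norm ws \<le> D"
    and "x \<in> borel_measurable M" and "eps \<in> borel_measurable M" and "b \<in> borel_measurable M"
    and "mutually_indep3 M x eps b"
    and "AE \<omega> in M. norm (x \<omega>) \<le> 1"
    and "\<forall>u::'a. (\<integral>\<omega>. (u \<bullet> (x \<omega> - (\<integral>\<omega>'. x \<omega>' \<partial>M)))\<^sup>2 \<partial>M) \<ge> \<rho> * (norm u)\<^sup>2"
    and "AE \<omega> in M. \<bar>eps \<omega>\<bar> \<le> \<sigma>"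
    and "(\<integral>\<omega>. eps \<omega> \<partial>M) = 0"
    and "measure M {\<omega>\<in>space M. b \<omega> \<noteq> 0} = \<alpha>"
    and "norm v \<le> 1" and "norm q \<le> 1"
    and "R = 6 * D + \<sigma>"
    and "G = (\<lambda>w. \<integral>\<omega>. huber R ((w - ws) \<bullet> (x \<omega> - v) - ws \<bullet> q - eps \<omega> - b \<omega>) \<partial>M)"
    and "\<forall>w\<in>cball 0 D.
           integrable M (\<lambda>\<omega>. huber R ((w - ws) \<bullet> (x \<omega> - v) - ws \<bullet> q - eps \<omega> - b \<omega>))"
  shows "strongly_convex_on (cball 0 D) ((1 - \<alpha>) * \<rho>) G
         \<and> (v = (\<integral>\<omega>. x \<omega> \<partial>M) \<longrightarrow>
              {w\<in>cball 0 D. \<forall>u\<in>cball 0 D. G w \<le> G u} = {ws})"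
proof -
  interpret P: prob_space M by (rule assms(1))
  note mx = assms(8) and me = assms(9) and mb = assms(10)
  define m where "m = (\<integral>\<omega>. x \<omega> \<partial>M)"
  define ind where "ind = (\<lambda>\<omega>. if b \<omega> = 0 then 1 else (0::real))"
  define H where "H = (\<lambda>w \<omega>. huber R ((w - ws) \<bullet> (x \<omega> - v) - ws \<bullet> q - eps \<omega> - b \<omega>))"
  define lam where "lam = (1 - \<alpha>) * \<rho>"
  have lam_pos: "lam > 0" unfolding lam_def using assms(5,6) by simp
  have GH: "\<And>w. G w = (\<integral>\<omega>. H w \<omega> \<partial>M)" unfolding assms(20) H_def by simp
  have intH: "\<And>w. w \<in> cball 0 D \<Longrightarrow> integrable M (H w)" using assms(21) unfolding H_def by blast
  have Rge: "R \<ge> 6 * D + \<sigma>" using assms(19) by simp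
  have cq: "\<bar>ws \<bullet> q\<bar> \<le> D"
  proof -
    have "norm ws * norm q \<le> D * 1" using assms(7,18,2) by (intro mult_mono) auto
    then show ?thesis using Cauchy_Schwarz_ineq2[of ws q] by linarith
  qed
  have int_x: "integrable M x"
    using assms(12) mx by (intro P.integrable_const_bound[where B=1]) auto
  have intY: "\<And>d p. integrable M (\<lambda>\<omega>. d \<bullet> (x \<omega> - p))"
  proof -
    fix d p :: 'a
    show "integrable M (\<lambda>\<omega>. d \<bullet> (x \<omega> - p))"
      using assms(12) mx lin_int_bound
      by (intro P.integrable_const_bound[where B="norm d * (1 + norm p)"]) (auto elim!: eventually_mono)
  qed
  have intY2: "\<And>d p. integrable M (\<lambda>\<omega>. (d \<bullet> (x \<omega> - p))\<^sup>2)"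
  proof -
    fix d p :: 'a
    show "integrable M (\<lambda>\<omega>. (d \<bullet> (x \<omega> - p))\<^sup>2)"
      using assms(12) mx sq_int_bound
      by (intro P.integrable_const_bound[where B="(norm d * (1 + norm p))\<^sup>2"]) (auto elim!: eventually_mono)
  qed
  have mean0: "\<And>d. (\<integral>\<omega>. d \<bullet> (x \<omega> - m) \<partial>M) = 0"
  proof -
    fix d :: 'a
    have "(\<integral>\<omega>. d \<bullet> (x \<omega> - m) \<partial>M) = (\<integral>\<omega>. d \<bullet> x \<omega> - d \<bullet> m \<partial>M)"
      by (simp add: inner_diff_right)
    also have "\<dots> = (\<integral>\<omega>. d \<bullet> x \<omega> \<partial>M) - (\<integral>\<omega>. d \<bullet> m \<partial>M)"
      using int_x by (intro Bochner_Integration.integral_diff) auto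
    also have "\<dots> = 0" using int_x unfolding m_def by (simp add: P.prob_space)
    finally show "(\<integral>\<omega>. d \<bullet> (x \<omega> - m) \<partial>M) = 0" .
  qed
  have var: "\<And>d. (\<integral>\<omega>. (d \<bullet> (x \<omega> - v))\<^sup>2 \<partial>M) \<ge> \<rho> * (norm d)\<^sup>2"
  proof -
    fix d :: 'a
    define k where "k = d \<bullet> (m - v)"
    have pt: "\<And>\<omega>. (d \<bullet> (x \<omega> - v))\<^sup>2 = (d \<bullet> (x \<omega> - m))\<^sup>2 + (2 * k) * (d \<bullet> (x \<omega> - m)) + k\<^sup>2"
    proof -
      fix \<omega>
      have "d \<bullet> (x \<omega> - v) = d \<bullet> (x \<omega> - m) + k" unfolding k_def by (simp add: inner_diff_right)
      then show "(d \<bullet> (x \<omega> - v))\<^sup>2 = (d \<bullet> (x \<omega> - m))\<^sup>2 + (2 * k) * (d \<bullet> (x \<omega> - m)) + k\<^sup>2"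
        by (simp add: power2_eq_square algebra_simps)
    qed
    have "(\<integral>\<omega>. (d \<bullet> (x \<omega> - v))\<^sup>2 \<partial>M) = (\<integral>\<omega>. (d \<bullet> (x \<omega> - m))\<^sup>2 + (2 * k) * (d \<bullet> (x \<omega> - m)) + k\<^sup>2 \<partial>M)"
      by (simp only: pt)
    also have "\<dots> = (\<integral>\<omega>. (d \<bullet> (x \<omega> - m))\<^sup>2 \<partial>M) + (2 * k) * (\<integral>\<omega>. d \<bullet> (x \<omega> - m) \<partial>M) + k\<^sup>2"
      using intY2 intY by (simp add: Bochner_Integration.integral_add P.prob_space)
    also have "\<dots> \<ge> (\<integral>\<omega>. (d \<bullet> (x \<omega> - m))\<^sup>2 \<partial>M)" using mean0 by (simp add: P.prob_space)
    finally have "(\<integral>\<omega>. (d \<bullet> (x \<omega> - v))\<^sup>2 \<partial>M) \<ge> (\<integral>\<omega>. (d \<bullet> (x \<omega> - m))\<^sup>2 \<partial>M)" .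
    moreover have "(\<integral>\<omega>. (d \<bullet> (x \<omega> - m))\<^sup>2 \<partial>M) \<ge> \<rho> * (norm d)\<^sup>2"
      using assms(13) unfolding m_def by blast
    ultimately show "(\<integral>\<omega>. (d \<bullet> (x \<omega> - v))\<^sup>2 \<partial>M) \<ge> \<rho> * (norm d)\<^sup>2" by linarith
  qed
  have gind_meas: "(\<lambda>z::real\<times>real. if snd z = 0 then 1 else (0::real)) \<in> borel_measurable borel"
  proof -
    have cl: "closed {z::real\<times>real. snd z = 0}"
      by (intro closed_Collect_eq continuous_intros)
    have "(\<lambda>z::real\<times>real. if snd z = 0 then 1 else (0::real)) = indicator {z. snd z = 0}"
      by (auto simp: indicator_def fun_eq_iff)
    then show ?thesis using borel_measurable_indicator[OF borel_closed[OF cl]] by simp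
  qed
  have Eind: "(\<integral>\<omega>. ind \<omega> \<partial>M) = 1 - \<alpha>"
  proof -
    have ev: "{\<omega>\<in>space M. b \<omega> \<noteq> 0} \<in> sets M" using mb by measurable
    have "(\<integral>\<omega>. ind \<omega> \<partial>M) = (\<integral>\<omega>. indicator (space M - {\<omega>\<in>space M. b \<omega> \<noteq> 0}) \<omega> \<partial>M)"
      unfolding ind_def by (intro Bochner_Integration.integral_cong) (auto simp: indicator_def)
    also have "\<dots> = measure M (space M - {\<omega>\<in>space M. b \<omega> \<noteq> 0})"
      using ev by (simp add: P.emeasure_eq_measure)
    also have "\<dots> = 1 - \<alpha>" using P.prob_compl[OF ev] assms(16) by simp
    finally show ?thesis .
  qed
  have indY2: "\<And>d. integrable M (\<lambda>\<omega>. (d \<bullet> (x \<omega> - v))\<^sup>2 * ind \<omega>)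
     \<and> (\<integral>\<omega>. (d \<bullet> (x \<omega> - v))\<^sup>2 * ind \<omega> \<partial>M) = (1 - \<alpha>) * (\<integral>\<omega>. (d \<bullet> (x \<omega> - v))\<^sup>2 \<partial>M)"
  proof -
    fix d :: 'a
    have fm: "(\<lambda>y. (d \<bullet> (y - v))\<^sup>2) \<in> borel_measurable borel" by measurable
    have iv: "P.indep_var borel (\<lambda>\<omega>. (d \<bullet> (x \<omega> - v))\<^sup>2) borel (\<lambda>\<omega>. if snd (eps \<omega>, b \<omega>) = 0 then 1 else (0::real))"
      by (rule P.indep_fg[OF assms(11) mx me mb fm gind_meas])
    have iv': "P.indep_var borel (\<lambda>\<omega>. (d \<bullet> (x \<omega> - v))\<^sup>2) borel ind"
      using iv unfolding ind_def by simp
    have ii: "integrable M ind" unfolding ind_def using mb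
      by (intro P.integrable_const_bound[where B=1]) auto
    show "integrable M (\<lambda>\<omega>. (d \<bullet> (x \<omega> - v))\<^sup>2 * ind \<omega>)
     \<and> (\<integral>\<omega>. (d \<bullet> (x \<omega> - v))\<^sup>2 * ind \<omega> \<partial>M) = (1 - \<alpha>) * (\<integral>\<omega>. (d \<bullet> (x \<omega> - v))\<^sup>2 \<partial>M)"
      using P.indep_var_integrable[OF iv' intY2 ii] P.indep_var_lebesgue_integral[OF iv' intY2 ii] Eind
      by simp
  qed
  have key: "\<And>d. (\<integral>\<omega>. (d \<bullet> (x \<omega> - v))\<^sup>2 * ind \<omega> \<partial>M) \<ge> lam * (norm d)\<^sup>2"
  proof -
    fix d :: 'a
    have "(1 - \<alpha>) * (\<rho> * (norm d)\<^sup>2) \<le> (1 - \<alpha>) * (\<integral>\<omega>. (d \<bullet> (x \<omega> - v))\<^sup>2 \<partial>M)"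
      using var[of d] assms(5) by (intro mult_left_mono) auto
    then show "(\<integral>\<omega>. (d \<bullet> (x \<omega> - v))\<^sup>2 * ind \<omega> \<partial>M) \<ge> lam * (norm d)\<^sup>2"
      using indY2[of d] unfolding lam_def by (simp add: mult.assoc)
  qed

  have Rnn: "0 \<le> R" using Rge assms(2,3) by linarith
  have p1: "strongly_convex_on (cball 0 D) lam G"
    unfolding strongly_convex_on_def
  proof (rule convex_onI)
    show "convex (cball (0::'a) D)" by (rule convex_cball)
    fix t :: real and w1 w2 :: 'a
    assume t: "0 < t" "t < 1" and w1: "w1 \<in> cball 0 D" and w2: "w2 \<in> cball 0 D"
    define wt where "wt = (1 - t) *\<^sub>R w1 + t *\<^sub>R w2"
    have wtc: "wt \<in> cball 0 D" unfolding wt_def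
      using convexD[OF convex_cball w1 w2, of "1 - t" t] t by simp
    define d where "d = w1 - w2"
    have n1: "norm w1 \<le> D" and n2: "norm w2 \<le> D" using w1 w2 by auto
    have AEi: "AE \<omega> in M. H wt \<omega> + ((1 - t) * t / 2) * ((d \<bullet> (x \<omega> - v))\<^sup>2 * ind \<omega>)
        \<le> (1 - t) * H w1 \<omega> + t * H w2 \<omega>"
      using assms(12) assms(14)
    proof eventually_elim
      case (elim \<omega>)
      define y where "y = x \<omega> - v"
      define p1 where "p1 = (w1 - ws) \<bullet> y"
      define p2 where "p2 = (w2 - ws) \<bullet> y"
      define k where "k = ws \<bullet> q + eps \<omega> + b \<omega>"
      have Hw1: "H w1 \<omega> = huber R (p1 - k)" unfolding H_def p1_def k_def y_def
        by (simp add: algebra_simps)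
      have Hw2: "H w2 \<omega> = huber R (p2 - k)" unfolding H_def p2_def k_def y_def
        by (simp add: algebra_simps)
      have "wt - ws = (1 - t) *\<^sub>R (w1 - ws) + t *\<^sub>R (w2 - ws)" unfolding wt_def
        by (simp add: algebra_simps)
      then have "(wt - ws) \<bullet> y = (1 - t) * p1 + t * p2" unfolding p1_def p2_def
        by (simp add: inner_add_left)
      then have "(wt - ws) \<bullet> (x \<omega> - v) - ws \<bullet> q - eps \<omega> - b \<omega> = (1 - t) * p1 + t * p2 - k"
        unfolding y_def k_def by linarith
      then have Hwt: "H wt \<omega> = huber R ((1 - t) * p1 + t * p2 - k)" unfolding H_def
        by simp
      have dp: "d \<bullet> (x \<omega> - v) = p1 - p2" unfolding d_def p1_def p2_def y_def
        by (simp add: inner_diff_left)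
      show ?case
      proof (cases "b \<omega> = 0")
        case True
        have bp1: "\<bar>p1\<bar> \<le> 4 * D" unfolding p1_def y_def
          using inner_bound4[OF elim(1) assms(17) norm_diff_2D[OF n1 assms(7)]] .
        have bp2: "\<bar>p2\<bar> \<le> 4 * D" unfolding p2_def y_def
          using inner_bound4[OF elim(1) assms(17) norm_diff_2D[OF n2 assms(7)]] .
        have bk: "\<bar>k\<bar> \<le> D + \<sigma>" unfolding k_def using True cq elim(2) by simp
        have r1: "\<bar>p1 - k\<bar> \<le> R" using bp1 bk Rge assms(2) by linarith
        have r2: "\<bar>p2 - k\<bar> \<le> R" using bp2 bk Rge assms(2) by linarith
        have "huber R ((1 - t) * p1 + (1 - (1 - t)) * p2 - k) + (1 - t) * (1 - (1 - t)) / 2 * (p1 - p2)\<^sup>2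
          \<le> (1 - t) * huber R (p1 - k) + (1 - (1 - t)) * huber R (p2 - k)"
          using t by (intro huber_strong_pt r1 r2) auto
        then show ?thesis using True unfolding Hw1 Hw2 Hwt dp ind_def by simp
      next
        case False
        have "huber R ((1 - t) * (p1 - k) + (1 - (1 - t)) * (p2 - k))
          \<le> (1 - t) * huber R (p1 - k) + (1 - (1 - t)) * huber R (p2 - k)"
          using t Rnn by (intro huber_convex) auto
        moreover have "(1 - t) * (p1 - k) + (1 - (1 - t)) * (p2 - k) = (1 - t) * p1 + t * p2 - k"
          by (simp add: algebra_simps)
        ultimately show ?thesis using False unfolding Hw1 Hw2 Hwt ind_def by simp
      qed
    qed
    have iw1: "integrable M (H w1)" using intH w1 by blast
    have iw2: "integrable M (H w2)" using intH w2 by blast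
    have iwt: "integrable M (H wt)" using intH wtc by blast
    have iI: "integrable M (\<lambda>\<omega>. (d \<bullet> (x \<omega> - v))\<^sup>2 * ind \<omega>)" using indY2 by blast
    have "(\<integral>\<omega>. H wt \<omega> + ((1 - t) * t / 2) * ((d \<bullet> (x \<omega> - v))\<^sup>2 * ind \<omega>) \<partial>M)
        \<le> (\<integral>\<omega>. (1 - t) * H w1 \<omega> + t * H w2 \<omega> \<partial>M)"
      using iw1 iw2 iwt iI AEi by (intro integral_mono_AE) auto
    then have F1: "G wt + ((1 - t) * t / 2) * (\<integral>\<omega>. (d \<bullet> (x \<omega> - v))\<^sup>2 * ind \<omega> \<partial>M)
        \<le> (1 - t) * G w1 + t * G w2"
      unfolding GH using iw1 iw2 iwt iI by (simp add: Bochner_Integration.integral_add)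
    have F2: "((1 - t) * t / 2) * (\<integral>\<omega>. (d \<bullet> (x \<omega> - v))\<^sup>2 * ind \<omega> \<partial>M)
        \<ge> ((1 - t) * t / 2) * (lam * (norm d)\<^sup>2)"
      using key[of d] t by (intro mult_left_mono) auto
    have nid: "(norm wt)\<^sup>2 = (1 - t) * (norm w1)\<^sup>2 + t * (norm w2)\<^sup>2 - (1 - t) * t * (norm d)\<^sup>2"
      unfolding wt_def d_def
      by (simp add: power2_norm_eq_inner inner_add_left inner_add_right inner_diff_left
          inner_diff_right inner_commute algebra_simps)
    have F3: "lam / 2 * (norm wt)\<^sup>2 = (1 - t) * (lam / 2 * (norm w1)\<^sup>2) + t * (lam / 2 * (norm w2)\<^sup>2)
        - ((1 - t) * t / 2) * (lam * (norm d)\<^sup>2)"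
      unfolding nid by (simp add: field_simps)
    have F4: "(1 - t) * (G w1 - lam / 2 * (norm w1)\<^sup>2) = (1 - t) * G w1 - (1 - t) * (lam / 2 * (norm w1)\<^sup>2)"
      by (simp add: right_diff_distrib)
    have F5: "t * (G w2 - lam / 2 * (norm w2)\<^sup>2) = t * G w2 - t * (lam / 2 * (norm w2)\<^sup>2)"
      by (simp add: right_diff_distrib)
    have "G wt - lam / 2 * (norm wt)\<^sup>2
        \<le> (1 - t) * (G w1 - lam / 2 * (norm w1)\<^sup>2) + t * (G w2 - lam / 2 * (norm w2)\<^sup>2)"
      unfolding F4 F5 F3 using F1 F2 by linarith
    then show "G ((1 - t) *\<^sub>R w1 + t *\<^sub>R w2) - lam / 2 * (norm ((1 - t) *\<^sub>R w1 + t *\<^sub>R w2))\<^sup>2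
        \<le> (1 - t) * (G w1 - lam / 2 * (norm w1)\<^sup>2) + t * (G w2 - lam / 2 * (norm w2)\<^sup>2)"
      unfolding wt_def .
  qed

  have p2: "v = (\<integral>\<omega>. x \<omega> \<partial>M) \<longrightarrow> {w\<in>cball 0 D. \<forall>u\<in>cball 0 D. G w \<le> G u} = {ws}"
  proof
    assume vm: "v = (\<integral>\<omega>. x \<omega> \<partial>M)"
    then have vm': "v = m" unfolding m_def .
    have wsc: "ws \<in> cball 0 D" using assms(7) by simp
    define a0 where "a0 = (\<lambda>\<omega>. max (-R) (min R (- (ws \<bullet> q) - eps \<omega> - b \<omega>)))"
    have lowb: "G w \<ge> G ws + lam / 2 * (norm (w - ws))\<^sup>2" if wc: "w \<in> cball 0 D" for w
    proof -
      define u where "u = w - ws"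
      have nw: "norm w \<le> D" using wc by simp
      have AEi: "AE \<omega> in M. H ws \<omega> + (u \<bullet> (x \<omega> - v)) * a0 \<omega> + 1 / 2 * ((u \<bullet> (x \<omega> - v))\<^sup>2 * ind \<omega>)
          \<le> H w \<omega>"
        using assms(12) assms(14)
      proof eventually_elim
        case (elim \<omega>)
        define p where "p = u \<bullet> (x \<omega> - v)"
        define s0 where "s0 = - (ws \<bullet> q) - eps \<omega> - b \<omega>"
        have Hw: "H w \<omega> = huber R (p + s0)"
        proof -
          have "(w - ws) \<bullet> (x \<omega> - v) - ws \<bullet> q - eps \<omega> - b \<omega> = p + s0"
            unfolding p_def s0_def u_def by linarith
          then show ?thesis unfolding H_def by simp
        qed
        have Hws: "H ws \<omega> = huber R s0" unfolding H_def s0_def by simp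
        have a0s: "a0 \<omega> = max (-R) (min R s0)" unfolding a0_def s0_def ..
        show ?case
        proof (cases "b \<omega> = 0")
          case True
          have bp: "\<bar>p\<bar> \<le> 4 * D" unfolding p_def u_def
            using inner_bound4[OF elim(1) assms(17) norm_diff_2D[OF nw assms(7)]] .
          have bs: "\<bar>s0\<bar> \<le> D + \<sigma>" unfolding s0_def using True cq elim(2) by simp
          have r1: "\<bar>s0\<bar> \<le> R" using bs Rge assms(2) by linarith
          have r2: "\<bar>p + s0\<bar> \<le> R" using bp bs Rge assms(2) by linarith
          have a: "a0 \<omega> = s0" unfolding a0s using r1 by (auto simp: abs_le_iff)
          have "(p + s0)\<^sup>2 / 2 = s0\<^sup>2 / 2 + p * s0 + 1 / 2 * (p\<^sup>2 * 1)"
            by (simp add: power2_eq_square field_simps)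
          then have "huber R s0 + p * a0 \<omega> + 1 / 2 * (p\<^sup>2 * ind \<omega>) \<le> huber R (p + s0)"
            unfolding huber_quad[OF r1] huber_quad[OF r2] a ind_def using True by simp
          then show ?thesis using Hw Hws unfolding p_def by simp
        next
          case False
          have aR: "\<bar>a0 \<omega>\<bar> \<le> R" unfolding a0s using Rnn by auto
          have h1: "a0 \<omega> * (p + s0) - (a0 \<omega>)\<^sup>2 / 2 \<le> huber R (p + s0)" by (rule huber_ge[OF aR])
          have h2: "huber R s0 = a0 \<omega> * s0 - (a0 \<omega>)\<^sup>2 / 2" unfolding a0s by (rule huber_clamp[OF Rnn])
          have h3: "a0 \<omega> * (p + s0) = p * a0 \<omega> + a0 \<omega> * s0" by (simp add: algebra_simps)
          have "huber R s0 + p * a0 \<omega> + 1 / 2 * (p\<^sup>2 * 0) \<le> huber R (p + s0)"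
            using h1 h2 h3 by linarith
          then have "huber R s0 + p * a0 \<omega> + 1 / 2 * (p\<^sup>2 * ind \<omega>) \<le> huber R (p + s0)"
            unfolding ind_def using False by simp
          then show ?thesis using Hw Hws unfolding p_def by simp
        qed
      qed
      have fm: "(\<lambda>y. u \<bullet> (y - v)) \<in> borel_measurable borel" by measurable
      have gm: "(\<lambda>z::real\<times>real. max (-R) (min R (- (ws \<bullet> q) - fst z - snd z))) \<in> borel_measurable borel"
        by (intro borel_measurable_continuous_onI continuous_intros)
      have iv: "P.indep_var borel (\<lambda>\<omega>. u \<bullet> (x \<omega> - v)) borel
          (\<lambda>\<omega>. max (-R) (min R (- (ws \<bullet> q) - fst (eps \<omega>, b \<omega>) - snd (eps \<omega>, b \<omega>))))"
        by (rule P.indep_fg[OF assms(11) mx me mb fm gm])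
      have iv': "P.indep_var borel (\<lambda>\<omega>. u \<bullet> (x \<omega> - v)) borel a0"
        using iv unfolding a0_def by simp
      have ia: "integrable M a0" unfolding a0_def using me mb Rnn
        by (intro P.integrable_const_bound[where B=R]) auto
      have ipa: "integrable M (\<lambda>\<omega>. (u \<bullet> (x \<omega> - v)) * a0 \<omega>)"
        by (rule P.indep_var_integrable[OF iv' intY ia])
      have Epa: "(\<integral>\<omega>. (u \<bullet> (x \<omega> - v)) * a0 \<omega> \<partial>M) = 0"
        using P.indep_var_lebesgue_integral[OF iv' intY ia] mean0[of u] vm' by simp
      have iws: "integrable M (H ws)" using intH wsc by blast
      have iw: "integrable M (H w)" using intH wc by blast
      have iI: "integrable M (\<lambda>\<omega>. (u \<bullet> (x \<omega> - v))\<^sup>2 * ind \<omega>)" using indY2 by blast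
      have "(\<integral>\<omega>. H ws \<omega> + (u \<bullet> (x \<omega> - v)) * a0 \<omega> + 1 / 2 * ((u \<bullet> (x \<omega> - v))\<^sup>2 * ind \<omega>) \<partial>M)
          \<le> (\<integral>\<omega>. H w \<omega> \<partial>M)"
        using iws iw iI ipa AEi by (intro integral_mono_AE) auto
      then have "G ws + 0 + 1 / 2 * (\<integral>\<omega>. (u \<bullet> (x \<omega> - v))\<^sup>2 * ind \<omega> \<partial>M) \<le> G w"
        unfolding GH using iws iI ipa Epa by (simp add: Bochner_Integration.integral_add)
      moreover have "1 / 2 * (\<integral>\<omega>. (u \<bullet> (x \<omega> - v))\<^sup>2 * ind \<omega> \<partial>M) \<ge> 1 / 2 * (lam * (norm u)\<^sup>2)"
        using key[of u] by simp
      ultimately show ?thesis unfolding u_def by simp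
    qed
    show "{w\<in>cball 0 D. \<forall>u\<in>cball 0 D. G w \<le> G u} = {ws}"
    proof (intro equalityI subsetI)
      fix w assume "w \<in> {w\<in>cball 0 D. \<forall>u\<in>cball 0 D. G w \<le> G u}"
      then have wc: "w \<in> cball 0 D" and le: "G w \<le> G ws" using wsc by auto
      have "lam / 2 * (norm (w - ws))\<^sup>2 \<le> 0" using lowb[OF wc] le by linarith
      then have "(norm (w - ws))\<^sup>2 \<le> 0" using lam_pos
        by (simp add: mult_le_0_iff)
      then have "w = ws" by simp
      then show "w \<in> {ws}" by simp
    next
      fix w :: 'a assume "w \<in> {ws}"
      then have w: "w = ws" by simp
      have "\<forall>u\<in>cball 0 D. G ws \<le> G u"
      proof
        fix u :: 'a assume "u \<in> cball 0 D"
        from lowb[OF this] have "G ws + lam / 2 * (norm (u - ws))\<^sup>2 \<le> G u" .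
        moreover have "0 \<le> lam / 2 * (norm (u - ws))\<^sup>2" using lam_pos by simp
        ultimately show "G ws \<le> G u" by linarith
      qed
      then show "w \<in> {w\<in>cball 0 D. \<forall>u\<in>cball 0 D. G w \<le> G u}" using w wsc by simp
    qed
  qed
  show ?thesis using p1 p2 unfolding lam_def by blast
qed

end
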